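(* Let $H$ be a twin-free simple graph on $n$ vertices, and let $i(H)$ be the minimum cardinality of an identifying code of $H$. Label the vertices of $H$ by $1,\dots,n$ via a bijection chosen uniformly at random among all $n!$ bijections, obtaining a graph $G$ on $\{1,\dots,n\}$, and run the lexicographic algorithm (Algorithm 1) on $G$. Then for every $K\in\{1,\dots,n\}$, the probability that the returned code has cardinality at most $K$ is at least the probability that $\{1,\dots,K\}$ is an identifying code of $G$. In particular, the algorithm returns an identifying code of cardinality $i(H)$ with probability at least $1/\binom{n}{i(H)}$.
   Context: For a graph on vertex set $\{1,\dots,n\}$ (vertices ordered by the usual order of integers) and a vertex $v$, $N(v)=\{v\}\cup\{w : vw\in E\}$ is its closed neighbourhood. A set $C$ of vertices is an identifying code if the sets $N(v)\cap C$, $v$ a vertex, are all nonempty and pairwise distinct. A graph is twin-free if $N(v)\neq N(w)$ for all distinct vertices $v,w$. The lexicographic algorithm (Algorithm 1) on a graph $G$ with vertex set $\{1,\dots,n\}$: set $C_0=\emptyset$. For $j=1,2,\dots,n$ in turn: (i) if $N(j)\cap C_{j-1}=\emptyset$, set $C_j=C_{j-1}\cup\{\min N(j)\}$; (ii) otherwise, if there exists $k\in\{1,\dots,j-1\}$ with $N(k)\cap C_{j-1}=N(j)\cap C_{j-1}$, let $k$ be the least such index; if $N(j)\neq N(k)$ set $C_j=C_{j-1}\cup\{\min(N(j)\triangle N(k))\}$, while if $N(j)=N(k)$ the algorithm stops immediately and returns "failure"; (iii) otherwise set $C_j=C_{j-1}$. If the algorithm never fails, it returns $C_n$. Here $\triangle$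 denotes symmetric difference. *)

theory Defs
  imports "HOL-Probability.Probability_Mass_Function" "HOL-Combinatorics.Multiset_Permutations"
begin

definition simple_graph :: "'a set \<Rightarrow> ('a \<Rightarrow> 'a \<Rightarrow> bool) \<Rightarrow> bool" where
  "simple_graph V E \<longleftrightarrow> finite V \<and> (\<forall>x y. E x y \<longrightarrow> E y x) \<and> (\<forall>x. \<not> E x x)
     \<and> (\<forall>x y. E x y \<longrightarrow> x \<in> V \<and> y \<in> V)"

definition nbhd :: "'a set \<Rightarrow> ('a \<Rightarrow> 'a \<Rightarrow> bool) \<Rightarrow> 'a \<Rightarrow> 'a set" where
  "nbhd V E v = {v} \<union> {w \<in> V. E v w}"

definition identifying_code :: "'a set \<Rightarrow> ('a \<Rightarrow> 'a \<Rightarrow> bool) \<Rightarrow> 'a set \<Rightarrow> bool" where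
  "identifying_code V E C \<longleftrightarrow> C \<subseteq> V
     \<and> (\<forall>v\<in>V. nbhd V E v \<inter> C \<noteq> {})
     \<and> (\<forall>v\<in>V. \<forall>w\<in>V. v \<noteq> w \<longrightarrow> nbhd V E v \<inter> C \<noteq> nbhd V E w \<inter> C)"

definition twin_free :: "'a set \<Rightarrow> ('a \<Rightarrow> 'a \<Rightarrow> bool) \<Rightarrow> bool" where
  "twin_free V E \<longleftrightarrow> (\<forall>v\<in>V. \<forall>w\<in>V. v \<noteq> w \<longrightarrow> nbhd V E v \<noteq> nbhd V E w)"

definition id_code_number :: "'a set \<Rightarrow> ('a \<Rightarrow> 'a \<Rightarrow> bool) \<Rightarrow> nat" where
  "id_code_number V E = (LEAST k. \<exists>C. identifying_code V E C \<and> card C = k)"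

text \<open>The graph on {1..n} obtained by labelling: vertex xs!(i-1) receives label i.
  A duplicate-free list xs with set xs = V encodes a bijection V -> {1..n}.\<close>
definition relabel :: "('a \<Rightarrow> 'a \<Rightarrow> bool) \<Rightarrow> 'a list \<Rightarrow> nat \<Rightarrow> nat \<Rightarrow> bool" where
  "relabel E xs i j = E (xs ! (i - 1)) (xs ! (j - 1))"

text \<open>One step (vertex j) of the lexicographic algorithm on a graph on {1..n};
  None means failure.\<close>
definition lex_step :: "nat \<Rightarrow> (nat \<Rightarrow> nat \<Rightarrow> bool) \<Rightarrow> nat \<Rightarrow> nat set \<Rightarrow> nat set option" where
  "lex_step n G j C =
     (let N = nbhd {1..n} G in
      if N j \<inter> C = {} then Some (C \<union> {Min (N j)})
      else if (\<exists>k\<in>{1..<j}. N k \<inter> C = N j \<inter> C) then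
        (let k = (LEAST k. k \<in> {1..<j} \<and> N k \<inter> C = N j \<inter> C) in
         if N j \<noteq> N k then Some (C \<union> {Min ((N j - N k) \<union> (N k - N j))}) else None)
      else Some C)"

primrec lex_run :: "nat \<Rightarrow> (nat \<Rightarrow> nat \<Rightarrow> bool) \<Rightarrow> nat \<Rightarrow> nat set option" where
  "lex_run n G 0 = Some {}"
| "lex_run n G (Suc j) = (case lex_run n G j of None \<Rightarrow> None | Some C \<Rightarrow> lex_step n G (Suc j) C)"

definition lex_algorithm :: "nat \<Rightarrow> (nat \<Rightarrow> nat \<Rightarrow> bool) \<Rightarrow> nat set option" where
  "lex_algorithm n G = lex_run n G n"

end

theory Submission
  imports Defs
begin

lemma nb_basic:
  fixes n j :: nat
  assumes "j \<in> {1..n}"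
  shows "j \<in> nbhd {1..n} G j" "nbhd {1..n} G j \<subseteq> {1..n}" "finite (nbhd {1..n} G j)"
proof -
  show a: "j \<in> nbhd {1..n} G j" "nbhd {1..n} G j \<subseteq> {1..n}" using assms by (auto simp: nbhd_def)
  show "finite (nbhd {1..n} G j)" using a(2) finite_subset by blast
qed

lemma lexA:
  assumes idc: "identifying_code {1..n} G {1..K}"
  shows "j \<le> n \<Longrightarrow> \<exists>C. lex_run n G j = Some C \<and> C \<subseteq> {1..K}"
proof (induction j)
  case 0
  then show ?case by simp
next
  case (Suc j)
  define N where "N = nbhd {1..n} G"
  let ?j = "Suc j"
  from Suc obtain C where C: "lex_run n G j = Some C" "C \<subseteq> {1..K}" by auto
  have jn: "?j \<in> {1..n}" using Suc.prems by auto
  have nbj: "?j \<in> N ?j" "N ?j \<subseteq> {1..n}" "finite (N ?j)" using nb_basic[OF jn] by (auto simp: N_def)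
  have ne: "N ?j \<inter> {1..K} \<noteq> {}" using idc jn by (auto simp: identifying_code_def N_def)
  have dist: "\<And>k. k \<in> {1..n} \<Longrightarrow> k \<noteq> ?j \<Longrightarrow> N k \<inter> {1..K} \<noteq> N ?j \<inter> {1..K}"
    using idc jn unfolding identifying_code_def N_def by blast
  have "\<exists>C'. lex_step n G ?j C = Some C' \<and> C' \<subseteq> {1..K}"
  proof (cases "N ?j \<inter> C = {}")
    case True
    have "Min (N ?j) \<in> {1..K}"
    proof -
      from ne obtain x where x: "x \<in> N ?j" "x \<le> K" by auto
      have "Min (N ?j) \<le> x" using x nbj by auto
      moreover have "Min (N ?j) \<in> N ?j" using nbj by (intro Min_in) auto
      moreover have "Min (N ?j) \<in> {1..n}" using nbj \<open>Min (N ?j) \<in> N ?j\<close> by blast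
      ultimately show ?thesis using x by simp
    qed
    then show ?thesis using True C by (simp add: lex_step_def N_def Let_def)
  next
    case False
    note F = False
    show ?thesis
    proof (cases "\<exists>k\<in>{1..<?j}. N k \<inter> C = N ?j \<inter> C")
      case True
      define k where "k = (LEAST k. k \<in> {1..<?j} \<and> N k \<inter> C = N ?j \<inter> C)"
      have k: "k \<in> {1..<?j}" "N k \<inter> C = N ?j \<inter> C"
        using LeastI_ex[of "\<lambda>k. k \<in> {1..<?j} \<and> N k \<inter> C = N ?j \<inter> C"] True
        unfolding k_def by blast+
      have kn: "k \<in> {1..n}" "k \<noteq> ?j" using k jn by auto
      have d: "N k \<inter> {1..K} \<noteq> N ?j \<inter> {1..K}" using dist kn by blast
      then have neq: "N ?j \<noteq> N k" by auto
      have nbk: "N k \<subseteq> {1..n}" "finite (N k)" using nb_basic[OF kn(1)] by (auto simp: N_def)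
      let ?S = "(N ?j - N k) \<union> (N k - N ?j)"
      have "Min ?S \<in> {1..K}"
      proof -
        have "\<exists>x\<in>?S. x \<le> K"
        proof (rule ccontr)
          assume "\<not> (\<exists>x\<in>?S. x \<le> K)"
          then have "N k \<inter> {1..K} = N ?j \<inter> {1..K}" by auto
          with d show False by simp
        qed
        then obtain x where x: "x \<in> ?S" "x \<le> K" by blast
        have fS: "finite ?S" using nbj nbk by auto
        have "Min ?S \<le> x" using x fS by auto
        moreover have "Min ?S \<in> ?S" using fS x by (intro Min_in) auto
        moreover have "?S \<subseteq> {1..n}" using nbj nbk by blast
        ultimately show ?thesis using x by (metis atLeastAtMost_iff order_trans subsetD)
      qed
      then show ?thesis using F True C neq
        by (simp add: lex_step_def N_def k_def Let_def)
    next
      case False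
      then show ?thesis using F C by (simp add: lex_step_def N_def Let_def)
    qed
  qed
  then show ?case using C by simp
qed

definition inv_lex :: "nat \<Rightarrow> (nat \<Rightarrow> nat \<Rightarrow> bool) \<Rightarrow> nat \<Rightarrow> nat set \<Rightarrow> bool" where
  "inv_lex n G j C \<longleftrightarrow> C \<subseteq> {1..n}
     \<and> (\<forall>v\<in>{1..j}. nbhd {1..n} G v \<inter> C \<noteq> {})
     \<and> (\<forall>v\<in>{1..j}. \<forall>w\<in>{1..j}. v \<noteq> w \<longrightarrow> nbhd {1..n} G v \<inter> C \<noteq> nbhd {1..n} G w \<inter> C)"

lemma lexB: "j \<le> n \<Longrightarrow> lex_run n G j = Some C \<Longrightarrow> inv_lex n G j C"
proof (induction j arbitrary: C)
  case 0
  then show ?case by (simp add: inv_lex_def)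
next
  case (Suc j C')
  define N where "N = nbhd {1..n} G"
  let ?j = "Suc j"
  from Suc.prems obtain C where C: "lex_run n G j = Some C" and st: "lex_step n G ?j C = Some C'"
    by (cases "lex_run n G j") auto
  have I: "inv_lex n G j C" using Suc.IH C Suc.prems by auto
  have Cn: "C \<subseteq> {1..n}"
    and I1: "\<And>v. v\<in>{1..j} \<Longrightarrow> N v \<inter> C \<noteq> {}"
    and I2: "\<And>v w. v\<in>{1..j} \<Longrightarrow> w\<in>{1..j} \<Longrightarrow> v \<noteq> w \<Longrightarrow> N v \<inter> C \<noteq> N w \<inter> C"
    using I unfolding inv_lex_def N_def by auto
  have jn: "?j \<in> {1..n}" using Suc.prems by auto
  have nbj: "?j \<in> N ?j" "N ?j \<subseteq> {1..n}" "finite (N ?j)" using nb_basic[OF jn] by (auto simp: N_def)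
  have key: "C \<subseteq> C' \<and> C' \<subseteq> {1..n} \<and> N ?j \<inter> C' \<noteq> {} \<and> (\<forall>v\<in>{1..j}. N v \<inter> C' \<noteq> N ?j \<inter> C')"
  proof (cases "N ?j \<inter> C = {}")
    case True
    then have C'eq: "C' = C \<union> {Min (N ?j)}" using st by (simp add: lex_step_def N_def Let_def)
    have m: "Min (N ?j) \<in> N ?j" using nbj by (intro Min_in) auto
    have "\<forall>v\<in>{1..j}. N v \<inter> C' \<noteq> N ?j \<inter> C'"
    proof
      fix v assume v: "v \<in> {1..j}"
      from I1[OF v] obtain x where x: "x \<in> N v" "x \<in> C" by auto
      have "x \<notin> N ?j" using True x by auto
      then show "N v \<inter> C' \<noteq> N ?j \<inter> C'" using x C'eq by auto
    qed
    then show ?thesis using C'eq m nbj Cn by auto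
  next
    case False
    note F = False
    show ?thesis
    proof (cases "\<exists>k\<in>{1..<?j}. N k \<inter> C = N ?j \<inter> C")
      case True
      define k where "k = (LEAST k. k \<in> {1..<?j} \<and> N k \<inter> C = N ?j \<inter> C)"
      have k: "k \<in> {1..<?j}" "N k \<inter> C = N ?j \<inter> C"
        using LeastI_ex[of "\<lambda>k. k \<in> {1..<?j} \<and> N k \<inter> C = N ?j \<inter> C"] True
        unfolding k_def by blast+
      have kn: "k \<in> {1..n}" "k \<in> {1..j}" using k jn by auto
      have neq: "N ?j \<noteq> N k" using st F True by (auto simp: lex_step_def N_def k_def Let_def)
      let ?S = "(N ?j - N k) \<union> (N k - N ?j)"
      have C'eq: "C' = C \<union> {Min ?S}" using st F True neq
        by (simp add: lex_step_def N_def k_def Let_def)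
      have nbk: "N k \<subseteq> {1..n}" "finite (N k)" using nb_basic[OF kn(1)] by (auto simp: N_def)
      have Sne: "?S \<noteq> {}" using neq by auto
      have m: "Min ?S \<in> ?S" using Sne nbj nbk by (intro Min_in) auto
      have "\<forall>v\<in>{1..j}. N v \<inter> C' \<noteq> N ?j \<inter> C'"
      proof
        fix v assume v: "v \<in> {1..j}"
        show "N v \<inter> C' \<noteq> N ?j \<inter> C'"
        proof (cases "v = k")
          case True
          then show ?thesis using m C'eq by blast
        next
          case False
          have "N v \<inter> C \<noteq> N ?j \<inter> C" using I2[OF v kn(2) False] k(2) by simp
          then show ?thesis using C'eq by blast
        qed
      qed
      then show ?thesis using C'eq m nbj nbk Cn F by blast
    next
      case False
      then have "C' = C" using st F by (simp add: lex_step_def N_def Let_def)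
      then show ?thesis using False F Cn by auto
    qed
  qed
  have pres: "\<And>v w. N v \<inter> C \<noteq> N w \<inter> C \<Longrightarrow> N v \<inter> C' \<noteq> N w \<inter> C'"
    using key by blast
  show ?case
    unfolding inv_lex_def N_def[symmetric]
  proof (intro conjI ballI impI)
    show "C' \<subseteq> {1..n}" using key by blast
  next
    fix v assume "v \<in> {1..?j}"
    then consider "v \<in> {1..j}" | "v = ?j" by fastforce
    then show "N v \<inter> C' \<noteq> {}" using I1 key by (cases) blast+
  next
    fix v w assume v: "v \<in> {1..?j}" and w: "w \<in> {1..?j}" and vw: "v \<noteq> w"
    consider "v \<in> {1..j}" "w \<in> {1..j}" | "v = ?j" "w \<in> {1..j}" | "w = ?j" "v \<in> {1..j}"
      using v w vw by fastforce
    then show "N v \<inter> C' \<noteq> N w \<inter> C'"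
    proof cases
      case 1 then show ?thesis using pres I2 vw by blast
    next
      case 2 then show ?thesis using key by metis
    next
      case 3 then show ?thesis using key by metis
    qed
  qed
qed

lemma lex_correct:
  assumes "lex_algorithm n G = Some C"
  shows "identifying_code {1..n} G C"
  using lexB[of n n G C] assms unfolding lex_algorithm_def inv_lex_def identifying_code_def by auto

lemma lex_bound:
  assumes "identifying_code {1..n} G {1..K}"
  shows "\<exists>C. lex_algorithm n G = Some C \<and> C \<subseteq> {1..K}"
  using lexA[OF assms, of n] unfolding lex_algorithm_def by auto

lemma perm_facts:
  assumes xs: "xs \<in> permutations_of_set V" and n: "card V = n"
  shows "(\<lambda>i. xs!(i-1)) ` {1..n} = V" "inj_on (\<lambda>i. xs!(i-1)) {1..n}" "length xs = n"
proof -
  have s: "set xs = V" and d: "distinct xs" using permutations_of_setD[OF xs] by auto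
  show l: "length xs = n" using length_finite_permutations_of_set[OF xs] n by simp
  show "(\<lambda>i. xs!(i-1)) ` {1..n} = V"
  proof
    show "(\<lambda>i. xs!(i-1)) ` {1..n} \<subseteq> V" using s l by auto
    show "V \<subseteq> (\<lambda>i. xs!(i-1)) ` {1..n}"
    proof
      fix x assume "x \<in> V"
      then obtain i where i: "i < n" "xs ! i = x" using s l by (auto simp: in_set_conv_nth)
      then show "x \<in> (\<lambda>i. xs!(i-1)) ` {1..n}" by (intro rev_image_eqI[of "Suc i"]) auto
    qed
  qed
  show "inj_on (\<lambda>i. xs!(i-1)) {1..n}"
  proof
    fix i j assume i: "i \<in> {1..n}" and j: "j \<in> {1..n}" and e: "xs!(i-1) = xs!(j-1)"
    have "i - 1 = j - 1" using nth_eq_iff_index_eq[OF d, of "i-1" "j-1"] e i j l by auto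
    then show "i = j" using i j by auto
  qed
qed

lemma relabel_transfer:
  assumes sg: "simple_graph V E" and xs: "xs \<in> permutations_of_set V" and n: "card V = n"
    and Cs: "C \<subseteq> {1..n}"
  shows "identifying_code {1..n} (relabel E xs) C \<longleftrightarrow> identifying_code V E ((\<lambda>i. xs!(i-1)) ` C)"
proof -
  define f where "f = (\<lambda>i. xs!(i-1))"
  define N where "N = nbhd {1..n} (relabel E xs)"
  have img: "f ` {1..n} = V" and inj: "inj_on f {1..n}" using perm_facts[OF xs n] by (auto simp: f_def)
  have Eq: "\<And>u w. E u w \<Longrightarrow> w \<in> V" using sg by (auto simp: simple_graph_def)
  have Nsub: "\<And>i. i \<in> {1..n} \<Longrightarrow> N i \<subseteq> {1..n}" by (auto simp: N_def nbhd_def)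
  have nb: "nbhd V E (f i) = f ` N i" if i: "i \<in> {1..n}" for i
  proof
    show "f ` N i \<subseteq> nbhd V E (f i)" using img by (auto simp: N_def nbhd_def relabel_def f_def)
    show "nbhd V E (f i) \<subseteq> f ` N i"
    proof
      fix u assume u: "u \<in> nbhd V E (f i)"
      show "u \<in> f ` N i"
      proof (cases "u = f i")
        case True then show ?thesis using i by (auto simp: N_def nbhd_def)
      next
        case False
        then have uV: "u \<in> V" and e: "E (f i) u" using u by (auto simp: nbhd_def)
        from uV img obtain w where w: "w \<in> {1..n}" "u = f w" by auto
        then show ?thesis using e by (auto simp: N_def nbhd_def relabel_def f_def)
      qed
    qed
  qed
  have tr: "nbhd V E (f i) \<inter> f ` C = f ` (N i \<inter> C)" if i: "i \<in> {1..n}" for i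
    using nb[OF i] inj_on_image_Int[OF inj Nsub[OF i] Cs] by simp
  have eqiff: "f ` (N i \<inter> C) = f ` (N j \<inter> C) \<longleftrightarrow> N i \<inter> C = N j \<inter> C"
    if "i \<in> {1..n}" "j \<in> {1..n}" for i j
    using inj_on_image_eq_iff[OF inj] Nsub that Cs by (meson Int_lower2 order_trans)
  have DV: "f ` C \<subseteq> V" using Cs img by auto
  have ballV: "\<And>P. (\<forall>v\<in>V. P v) \<longleftrightarrow> (\<forall>i\<in>{1..n}. P (f i))" using img by auto
  have part1: "(\<forall>v\<in>V. nbhd V E v \<inter> f ` C \<noteq> {}) \<longleftrightarrow> (\<forall>i\<in>{1..n}. N i \<inter> C \<noteq> {})"
    unfolding ballV using tr by auto
  have part2: "(\<forall>v\<in>V. \<forall>w\<in>V. v \<noteq> w \<longrightarrow> nbhd V E v \<inter> f ` C \<noteq> nbhd V E w \<inter> f ` C)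
      \<longleftrightarrow> (\<forall>i\<in>{1..n}. \<forall>j\<in>{1..n}. i \<noteq> j \<longrightarrow> N i \<inter> C \<noteq> N j \<inter> C)"
  proof -
    have "\<And>i j. i \<in> {1..n} \<Longrightarrow> j \<in> {1..n} \<Longrightarrow> f i \<noteq> f j \<longleftrightarrow> i \<noteq> j"
      using inj by (auto dest: inj_onD)
    then show ?thesis unfolding ballV using tr eqiff by auto
  qed
  have L: "identifying_code {1..n} (relabel E xs) C \<longleftrightarrow> (\<forall>i\<in>{1..n}. N i \<inter> C \<noteq> {})
      \<and> (\<forall>i\<in>{1..n}. \<forall>j\<in>{1..n}. i \<noteq> j \<longrightarrow> N i \<inter> C \<noteq> N j \<inter> C)"
    unfolding identifying_code_def N_def using Cs by simp
  have R: "identifying_code V E (f ` C) \<longleftrightarrow> (\<forall>i\<in>{1..n}. N i \<inter> C \<noteq> {})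
      \<and> (\<forall>i\<in>{1..n}. \<forall>j\<in>{1..n}. i \<noteq> j \<longrightarrow> N i \<inter> C \<noteq> N j \<inter> C)"
    unfolding identifying_code_def using DV part1 part2 by (simp only: simp_thms)
  show ?thesis using L R unfolding f_def by (simp only:)
qed

lemma count_T:
  assumes fin: "finite V" and D: "D \<subseteq> V" and k: "card D = k"
  shows "fact k * fact (card V - k) \<le> card {xs \<in> permutations_of_set V. set (take k xs) = D}"
proof -
  define X where "X = permutations_of_set D \<times> permutations_of_set (V - D)"
  define g where "g = (\<lambda>(a, b). (a::'a list) @ b)"
  have finD: "finite D" using fin D finite_subset by blast
  have lenA: "\<And>a. a \<in> permutations_of_set D \<Longrightarrow> length a = k"
    using length_finite_permutations_of_set k by blast
  have inj: "inj_on g X"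
  proof
    fix p q assume p: "p \<in> X" and q: "q \<in> X" and e: "g p = g q"
    obtain a b where ab: "p = (a, b)" by (cases p)
    obtain a' b' where ab': "q = (a', b')" by (cases q)
    have "length a = length a'" using p q ab ab' lenA by (auto simp: X_def)
    then show "p = q" using e ab ab' by (auto simp: g_def)
  qed
  have sub: "g ` X \<subseteq> {xs \<in> permutations_of_set V. set (take k xs) = D}"
  proof
    fix y assume "y \<in> g ` X"
    then obtain a b where a: "a \<in> permutations_of_set D" and b: "b \<in> permutations_of_set (V - D)"
      and y: "y = a @ b" by (auto simp: X_def g_def)
    have sa: "set a = D" "distinct a" and sb: "set b = V - D" "distinct b"
      using permutations_of_setD a b by blast+
    have "length a = k" using lenA a by blast
    then show "y \<in> {xs \<in> permutations_of_set V. set (take k xs) = D}"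
      using sa sb D y by (auto intro!: permutations_of_setI)
  qed
  have fT: "finite {xs \<in> permutations_of_set V. set (take k xs) = D}" by simp
  have "card (g ` X) = fact k * fact (card V - k)"
    using card_image[OF inj] finD fin D k
    by (simp add: X_def card_cartesian_product card_Diff_subset)
  then show ?thesis using card_mono[OF fT sub] by simp
qed

lemma img_take:
  assumes "k \<le> length xs"
  shows "(\<lambda>i. xs!(i-1)) ` {1..k} = set (take k xs)"
proof
  show "(\<lambda>i. xs!(i-1)) ` {1..k} \<subseteq> set (take k xs)"
  proof
    fix x assume "x \<in> (\<lambda>i. xs!(i-1)) ` {1..k}"
    then obtain i where i: "i \<in> {1..k}" "x = xs!(i-1)" by auto
    then have "take k xs ! (i-1) = x" "i - 1 < length (take k xs)" using assms by auto
    then show "x \<in> set (take k xs)" by (metis nth_mem)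
  qed
  show "set (take k xs) \<subseteq> (\<lambda>i. xs!(i-1)) ` {1..k}"
  proof
    fix x assume "x \<in> set (take k xs)"
    then obtain i where i: "i < length (take k xs)" "take k xs ! i = x" by (auto simp: in_set_conv_nth)
    then show "x \<in> (\<lambda>i. xs!(i-1)) ` {1..k}" using assms by (intro rev_image_eqI[of "Suc i"]) auto
  qed
qed

theorem mainTheorem5:
  fixes V :: "'a set" and E :: "'a \<Rightarrow> 'a \<Rightarrow> bool" and n :: nat
  assumes "simple_graph V E" and "twin_free V E" and "card V = n"
  defines "P \<equiv> pmf_of_set (permutations_of_set V)"
  shows "(\<forall>K\<in>{1..n}.
            measure_pmf.prob P {xs. \<exists>C. lex_algorithm n (relabel E xs) = Some C \<and> card C \<le> K}
          \<ge> measure_pmf.prob P {xs. identifying_code {1..n} (relabel E xs) {1..K}})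
       \<and> measure_pmf.prob P {xs. \<exists>C. lex_algorithm n (relabel E xs) = Some C
              \<and> identifying_code {1..n} (relabel E xs) C \<and> card C = id_code_number V E}
          \<ge> 1 / real (n choose id_code_number V E)"
proof
  note sg = assms(1) and tf = assms(2) and cV = assms(3)
  define S where "S = permutations_of_set V"
  have finV: "finite V" using sg by (simp add: simple_graph_def)
  have Sfin: "finite S" and Sne: "S \<noteq> {}" using finV by (auto simp: S_def)
  have prob: "\<And>A. measure_pmf.prob P A = card (S \<inter> A) / card S"
    unfolding P_def S_def[symmetric] using measure_pmf_of_set[OF Sne Sfin] by simp
  have cS: "card S = fact n" using finV cV by (simp add: S_def)
  show "\<forall>K\<in>{1..n}.
            measure_pmf.prob P {xs. \<exists>C. lex_algorithm n (relabel E xs) = Some C \<and> card C \<le> K}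
          \<ge> measure_pmf.prob P {xs. identifying_code {1..n} (relabel E xs) {1..K}}"
  proof
    fix K :: nat
    have "{xs. identifying_code {1..n} (relabel E xs) {1..K}}
       \<subseteq> {xs. \<exists>C. lex_algorithm n (relabel E xs) = Some C \<and> card C \<le> K}"
    proof
      fix xs assume "xs \<in> {xs. identifying_code {1..n} (relabel E xs) {1..K}}"
      then obtain C where "lex_algorithm n (relabel E xs) = Some C" "C \<subseteq> {1..K}"
        using lex_bound by blast
      moreover have "card C \<le> K" using card_mono[OF _ \<open>C \<subseteq> {1..K}\<close>] by simp
      ultimately show "xs \<in> {xs. \<exists>C. lex_algorithm n (relabel E xs) = Some C \<and> card C \<le> K}" by blast
    qed
    then show "measure_pmf.prob P {xs. \<exists>C. lex_algorithm n (relabel E xs) = Some C \<and> card C \<le> K}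
          \<ge> measure_pmf.prob P {xs. identifying_code {1..n} (relabel E xs) {1..K}}"
      by (intro measure_pmf.finite_measure_mono) auto
  qed
next
  note sg = assms(1) and tf = assms(2) and cV = assms(3)
  define S where "S = permutations_of_set V"
  have finV: "finite V" using sg by (simp add: simple_graph_def)
  have Sfin: "finite S" and Sne: "S \<noteq> {}" using finV by (auto simp: S_def)
  have prob: "\<And>A. measure_pmf.prob P A = card (S \<inter> A) / card S"
    unfolding P_def S_def[symmetric] using measure_pmf_of_set[OF Sne Sfin] by simp
  have cS: "card S = fact n" using finV cV by (simp add: S_def)
  define k where "k = id_code_number V E"
  have Vcode: "identifying_code V E V"
    using tf unfolding identifying_code_def twin_free_def nbhd_def by auto
  have "\<exists>C. identifying_code V E C \<and> card C = k"
    unfolding k_def id_code_number_def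
    by (rule LeastI_ex[of "\<lambda>k. \<exists>C. identifying_code V E C \<and> card C = k"]) (use Vcode in blast)
  then obtain Cs where Cs: "identifying_code V E Cs" "card Cs = k" by blast
  have CsV: "Cs \<subseteq> V" using Cs by (simp add: identifying_code_def)
  have kn: "k \<le> n" using card_mono[OF finV CsV] Cs cV by simp
  define B where "B = {xs. \<exists>C. lex_algorithm n (relabel E xs) = Some C
              \<and> identifying_code {1..n} (relabel E xs) C \<and> card C = id_code_number V E}"
  define T where "T = {xs \<in> S. set (take k xs) = Cs}"
  have TB: "T \<subseteq> S \<inter> B"
  proof
    fix xs assume "xs \<in> T"
    then have xs: "xs \<in> permutations_of_set V" and tk: "set (take k xs) = Cs" by (auto simp: T_def S_def)
    define f where "f = (\<lambda>i. xs!(i-1))"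
    have len: "length xs = n" and inj: "inj_on f {1..n}" using perm_facts[OF xs cV] by (auto simp: f_def)
    have "f ` {1..k} = Cs" using img_take[of k xs] len kn tk by (simp add: f_def)
    then have "identifying_code {1..n} (relabel E xs) {1..k}"
      using relabel_transfer[OF sg xs cV, of "{1..k}"] kn Cs(1) by (simp add: f_def)
    then obtain C where C: "lex_algorithm n (relabel E xs) = Some C" "C \<subseteq> {1..k}"
      using lex_bound by blast
    have ic: "identifying_code {1..n} (relabel E xs) C" using lex_correct[OF C(1)] .
    have Cn: "C \<subseteq> {1..n}" using C(2) kn by auto
    have "identifying_code V E (f ` C)" using relabel_transfer[OF sg xs cV Cn] ic by (simp add: f_def)
    moreover have "card (f ` C) = card C" using card_image[OF inj_on_subset[OF inj Cn]] .
    ultimately have "k \<le> card C" unfolding k_def id_code_number_def by (metis (mono_tags, lifting) Least_le)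
    moreover have "card C \<le> k" using card_mono[OF _ C(2)] by simp
    ultimately have "card C = id_code_number V E" by (simp add: k_def)
    then show "xs \<in> S \<inter> B" using C ic \<open>xs \<in> T\<close> by (auto simp: B_def T_def)
  qed
  have "fact k * fact (n - k) \<le> card T"
    using count_T[OF finV CsV Cs(2)] cV by (simp add: T_def S_def)
  also have "\<dots> \<le> card (S \<inter> B)" using card_mono[OF _ TB] Sfin by simp
  finally have c: "real (fact k * fact (n - k)) \<le> real (card (S \<inter> B))" by linarith
  have "1 / real (n choose k) = real (fact k * fact (n - k)) / fact n"
  proof -
    have h: "real (n choose k) = fact n / (fact k * fact (n - k))" using binomial_fact[OF kn] by simp
    show ?thesis unfolding h by simp
  qed
  also have "\<dots> \<le> real (card (S \<inter> B)) / fact n"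
    using c by (intro divide_right_mono) auto
  also have "\<dots> = measure_pmf.prob P B" using prob cS by simp
  finally show "measure_pmf.prob P {xs. \<exists>C. lex_algorithm n (relabel E xs) = Some C
              \<and> identifying_code {1..n} (relabel E xs) C \<and> card C = id_code_number V E}
          \<ge> 1 / real (n choose id_code_number V E)" by (simp add: B_def k_def)
qed

end
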